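(* Let $m,n$ be nonnegative integers, $I\subseteq[m-1]$, $J\subseteq[n-1]$, $K\subseteq[m+n-1]$. The following three numbers are equal: (a) the number of overlapping shuffles of $\mathrm{comp}(I^c)$ and $\mathrm{comp}(J^c)$ with weight $\mathrm{comp}(K^c)$, i.e. the coefficient of $M_{\mathrm{comp}(K^c)}$ in $M_{\mathrm{comp}(I^c)}M_{\mathrm{comp}(J^c)}$; (b) the number of $A\subseteq[m+n]$ with $|A|=n$ such that $(I\#_AJ)\cap c(A)=\emptyset$, $I\#_AJ\subseteq K\subseteq(I\#_AJ)\cup c(A)$, and $|K\setminus c_2(A)|=|I|+|J|$; (c) the number of $A\subseteq[m+n]$ with $|A|=n$ such that $(I\#_AJ)\cap c(A)=\emptyset$, $I\#_AJ\subseteq K\subseteq(I\#_AJ)\cup c(A)$, and $K\cap c_2(A)=\emptyset$.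
   Context: $[n]=\{1,\dots,n\}$ (empty if $n\le0$). Complements: $I^c=[m-1]\setminus I$, $J^c=[n-1]\setminus J$, $K^c=[m+n-1]\setminus K$. For $N\ge1$ and $S\subseteq[N-1]$, $\mathrm{comp}(\{s_1<\dots<s_i\})=(s_1,s_2-s_1,\dots,N-s_i)$ is a composition of $N$; $\mathrm{comp}(\emptyset)$ for $N=0$ is the empty composition. $M_\alpha=\sum_{j_1<\dots<j_l}x_{j_1}^{\alpha_1}\cdots x_{j_l}^{\alpha_l}$ are the monomial quasisymmetric functions ($M_\emptyset=1$). For $A\subseteq[N]$ with $N=m+n$: $\mathrm{conn}(A)$ is the set of maximal subsets of consecutive integers of $A$, $A^c=[N]\setminus A$, $c_1(A)=\{\max B:B\in\mathrm{conn}(A)\}\setminus\{N\}$, $c_2(A)=\{\max B:B\in\mathrm{conn}(A^c)\}\setminus\{N\}$, $c(A)=c_1(A)\cup c_2(A)$. For $|A|=n$, write $A=\{b_1<\dots<b_n\}$ and $[m+n]\setminus A=\{a_1<\dots<a_m\}$, and set $I\#_AJ=\{a_i:i\in I\}\cup\{b_j:j\in J\}$. *)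

theory Defs
  imports Main
begin

text \<open>[N] = {1..N}; compositions are lists of positive naturals.\<close>

definition nset :: "nat \<Rightarrow> nat set" where
  "nset N = {1..N}"

definition comp :: "nat \<Rightarrow> nat set \<Rightarrow> nat list" where
  "comp N S = (if N = 0 then [] else
     (let xs = [0] @ sorted_list_of_set S @ [N]
      in map (\<lambda>i. xs ! (i+1) - xs ! i) [0..<length xs - 1]))"

text \<open>Overlapping shuffles (quasi-shuffles) of \<alpha> and \<beta> with weight \<gamma>:
  pairs of strictly increasing maps f : [l(\<alpha>)] \<rightarrow> [l(\<gamma>)], g : [l(\<beta>)] \<rightarrow> [l(\<gamma>)]
  (0-indexed, encoded as lists) whose images cover [l(\<gamma>)] and such that
  \<gamma>_k = sum of \<alpha>_i with f i = k plus sum of \<beta>_j with g j = k.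
  Their number is the coefficient of M_\<gamma> in M_\<alpha> M_\<beta>.\<close>
definition overlapping_shuffles :: "nat list \<Rightarrow> nat list \<Rightarrow> nat list \<Rightarrow> (nat list \<times> nat list) set" where
  "overlapping_shuffles \<alpha> \<beta> \<gamma> =
     {(f, g). length f = length \<alpha> \<and> length g = length \<beta> \<and>
              sorted_wrt (<) f \<and> sorted_wrt (<) g \<and>
              set f \<union> set g = {0..<length \<gamma>} \<and>
              (\<forall>k < length \<gamma>. \<gamma> ! k =
                  (\<Sum>i<length \<alpha>. if f ! i = k then \<alpha> ! i else 0)
                + (\<Sum>j<length \<beta>. if g ! j = k then \<beta> ! j else 0))}"

definition conn :: "nat set \<Rightarrow> nat set set" where
  "conn A = {B. B \<noteq> {} \<and> B \<subseteq> A \<and> (\<exists>a b. B = {a..b}) \<and>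
              (\<forall>C. C \<subseteq> A \<and> (\<exists>a b. C = {a..b}) \<and> B \<subseteq> C \<longrightarrow> C = B)}"

definition c1 :: "nat \<Rightarrow> nat set \<Rightarrow> nat set" where
  "c1 N A = (Max ` conn A) - {N}"

definition c2 :: "nat \<Rightarrow> nat set \<Rightarrow> nat set" where
  "c2 N A = (Max ` conn (nset N - A)) - {N}"

definition cset :: "nat \<Rightarrow> nat set \<Rightarrow> nat set" where
  "cset N A = c1 N A \<union> c2 N A"

text \<open>I #_A J for A \<subseteq> [m+n] with |A| = n: b_j is the j-th smallest element of A,
  a_i the i-th smallest element of [m+n] \ A (1-indexed).\<close>
definition shuf_set :: "nat \<Rightarrow> nat \<Rightarrow> nat set \<Rightarrow> nat set \<Rightarrow> nat set \<Rightarrow> nat set" where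
  "shuf_set m n A I J =
     (\<lambda>i. sorted_list_of_set (nset (m+n) - A) ! (i - 1)) ` I
   \<union> (\<lambda>j. sorted_list_of_set A ! (j - 1)) ` J"

end

theory Submission
  imports Defs
begin

definition loc :: "bool \<Rightarrow> bool option \<Rightarrow> bool \<Rightarrow> bool \<Rightarrow> bool" where
  "loc x nx s t = (case nx of Some y \<Rightarrow> (if y \<noteq> x then s \<and> (x \<or> t) else s = t) | None \<Rightarrow> s = t)"

definition nxt :: "bool list \<Rightarrow> bool option" where
  "nxt w = (case w of [] \<Rightarrow> None | y # _ \<Rightarrow> Some y)"

fun ok :: "bool list \<Rightarrow> bool list \<Rightarrow> bool list \<Rightarrow> bool list \<Rightarrow> bool" where
  "ok u v [] [] = (u = [] \<and> v = [])"
| "ok u v (tc # t) (x # w) = (if x then v \<noteq> [] \<and> loc x (nxt w) (hd v) tc \<and> ok u (tl v) t w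
                               else u \<noteq> [] \<and> loc x (nxt w) (hd u) tc \<and> ok (tl u) v t w)"
| "ok u v [] (x # w) = False"
| "ok u v (tc # t) [] = False"

fun enc :: "nat list \<Rightarrow> bool list" where
  "enc [] = []"
| "enc (a # as) = replicate (a - 1) False @ True # enc as"

lemma ok_Nil: "ok u v t [] \<longleftrightarrow> u = [] \<and> v = [] \<and> t = []"
  by (cases t) auto

lemma ok_length: "ok u v t w \<Longrightarrow> length t = length w"
  by (induction u v t w rule: ok.induct) (auto split: if_splits)

lemma L0: "ok (replicate k False @ True # u) v t (False # w) \<longleftrightarrow>
  (\<exists>tc t'' w''. t = replicate k False @ tc # t'' \<and> w = replicate k False @ w'' \<and>
     loc False (nxt w'') True tc \<and> ok u v t'' w'')"
proof (induction k arbitrary: t w)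
  case 0
  then show ?case by (cases t) auto
next
  case (Suc k)
  show ?case
  proof (cases t)
    case Nil then show ?thesis by auto
  next
    case (Cons tc t1)
    have "ok (replicate (Suc k) False @ True # u) v t (False # w) \<longleftrightarrow>
          loc False (nxt w) False tc \<and> ok (replicate k False @ True # u) v t1 w"
      using Cons by simp
    also have "\<dots> \<longleftrightarrow> (\<exists>w1. w = False # w1 \<and> tc = False \<and> ok (replicate k False @ True # u) v t1 (False # w1))"
    proof (cases w)
      case Nil then show ?thesis by (simp add: ok_Nil)
    next
      case (Cons y w1) then show ?thesis by (cases y) (auto simp: loc_def nxt_def)
    qed
    finally have e1: "ok (replicate (Suc k) False @ True # u) v t (False # w) \<longleftrightarrow> (\<exists>w1. w = False # w1 \<and> tc = False \<and> ok (replicate k False @ True # u) v t1 (False # w1))" .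
    show ?thesis unfolding e1 Suc.IH using Cons by (simp only: replicate_Suc append_Cons list.inject) blast
  qed
qed

lemma L1: "ok u (replicate k False @ True # v) t (True # w) \<longleftrightarrow>
  (\<exists>tc t'' w''. t = replicate k False @ tc # t'' \<and> w = replicate k True @ w'' \<and>
     loc True (nxt w'') True tc \<and> ok u v t'' w'')"
proof (induction k arbitrary: t w)
  case 0
  then show ?case by (cases t) auto
next
  case (Suc k)
  show ?case
  proof (cases t)
    case Nil then show ?thesis by auto
  next
    case (Cons tc t1)
    have "ok u (replicate (Suc k) False @ True # v) t (True # w) \<longleftrightarrow>
          loc True (nxt w) False tc \<and> ok u (replicate k False @ True # v) t1 w"
      using Cons by simp
    also have "\<dots> \<longleftrightarrow> (\<exists>w1. w = True # w1 \<and> tc = False \<and> ok u (replicate k False @ True # v) t1 (True # w1))"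
    proof (cases w)
      case Nil then show ?thesis by (simp add: ok_Nil)
    next
      case (Cons y w1) then show ?thesis by (cases y) (auto simp: loc_def nxt_def)
    qed
    finally have e1: "ok u (replicate (Suc k) False @ True # v) t (True # w) \<longleftrightarrow> (\<exists>w1. w = True # w1 \<and> tc = False \<and> ok u (replicate k False @ True # v) t1 (True # w1))" .
    show ?thesis unfolding e1 Suc.IH using Cons by (simp only: replicate_Suc append_Cons list.inject) blast
  qed
qed

lemma rep_eq: "replicate p False @ True # r = replicate q False @ tc # s \<Longrightarrow>
  (p = q \<and> tc = True \<and> r = s) \<or> (q < p \<and> tc = False \<and> s = replicate (p - q - 1) False @ True # r)"
proof (induction p arbitrary: q)
  case 0
  then show ?case by (cases q) auto
next
  case (Suc p)
  then show ?case by (cases q) auto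
qed


definition pos :: "nat list \<Rightarrow> bool" where "pos xs = (\<forall>a\<in>set xs. 0 < a)"

lemma loc_TF: "\<not> loc False nx True False"
  by (auto simp: loc_def split: option.splits)

lemma loc_TT: "loc x nx True True"
  by (auto simp: loc_def split: option.splits)

lemma loc_True_TF: "loc True nx True False \<longleftrightarrow> nx = Some False"
  by (auto simp: loc_def split: option.splits)

lemma rep_Suc_pred: "0 < a \<Longrightarrow> False # replicate (a - 1) x @ w = replicate a False @ w \<or> True"
  by simp

lemma ok_u_Nil[simp]: "\<not> ok [] v t (False # w)" by (cases t) auto
lemma ok_v_Nil[simp]: "\<not> ok u [] t (True # w)" by (cases t) auto

lemma enc_Cons_ne: "enc (c # g) \<noteq> []" by simp

lemma Wstep:
  assumes pa: "pos \<alpha>" and pb: "pos \<beta>" and pc: "0 < c"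
  shows "ok (enc \<alpha>) (enc \<beta>) (enc (c # \<gamma>)) w \<longleftrightarrow>
   (\<exists>\<alpha>' w'. \<alpha> = c # \<alpha>' \<and> w = replicate c False @ w' \<and> ok (enc \<alpha>') (enc \<beta>) (enc \<gamma>) w') \<or>
   (\<exists>\<beta>' w'. \<beta> = c # \<beta>' \<and> w = replicate c True @ w' \<and> ok (enc \<alpha>) (enc \<beta>') (enc \<gamma>) w') \<or>
   (\<exists>a \<alpha>' b \<beta>' w'. \<alpha> = a # \<alpha>' \<and> \<beta> = b # \<beta>' \<and> a + b = c \<and>
       w = replicate b True @ replicate a False @ w' \<and> ok (enc \<alpha>') (enc \<beta>') (enc \<gamma>) w')"
  (is "?L \<longleftrightarrow> ?R")
proof
  assume L: ?L
  have et: "enc (c # \<gamma>) = replicate (c - 1) False @ True # enc \<gamma>" by simp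
  obtain x w1 where w: "w = x # w1"
    using L by (cases w) (auto simp: ok_Nil)
  show ?R
  proof (cases x)
    case False
    obtain a \<alpha>' where al: "\<alpha> = a # \<alpha>'"
      using L w False by (cases \<alpha>) auto
    have a0: "0 < a" using pa al by (simp add: pos_def)
    from L have "ok (replicate (a - 1) False @ True # enc \<alpha>') (enc \<beta>) (replicate (c - 1) False @ True # enc \<gamma>) (False # w1)"
      using al w False by simp
    then obtain tc t'' w'' where h: "replicate (c - 1) False @ True # enc \<gamma> = replicate (a - 1) False @ tc # t''"
      "w1 = replicate (a - 1) False @ w''" "loc False (nxt w'') True tc" "ok (enc \<alpha>') (enc \<beta>) t'' w''"
      unfolding L0 by blast
    from rep_eq[OF h(1)] h(3) loc_TF have "c - 1 = a - 1 \<and> tc = True \<and> enc \<gamma> = t''" by blast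
    then have "a = c" "t'' = enc \<gamma>" using a0 pc by auto
    moreover have "w = replicate c False @ w''" using w False h(2) \<open>a = c\<close> a0
      by (cases c) auto
    ultimately show ?R using al h(4) by blast
  next
    case True
    obtain b \<beta>' where bl: "\<beta> = b # \<beta>'"
      using L w True by (cases \<beta>) auto
    have b0: "0 < b" using pb bl by (simp add: pos_def)
    from L have "ok (enc \<alpha>) (replicate (b - 1) False @ True # enc \<beta>') (replicate (c - 1) False @ True # enc \<gamma>) (True # w1)"
      using bl w True by simp
    then obtain tc t'' w'' where h: "replicate (c - 1) False @ True # enc \<gamma> = replicate (b - 1) False @ tc # t''"
      "w1 = replicate (b - 1) True @ w''" "loc True (nxt w'') True tc" "ok (enc \<alpha>) (enc \<beta>') t'' w''"
      unfolding L1 by blast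
    have wb: "w = replicate b True @ w''" using w True h(2) b0 by (cases b) auto
    from rep_eq[OF h(1)] show ?R
    proof
      assume "c - 1 = b - 1 \<and> tc = True \<and> enc \<gamma> = t''"
      then have "b = c" "t'' = enc \<gamma>" using b0 pc by auto
      then show ?R using bl h(4) wb by blast
    next
      assume H: "b - 1 < c - 1 \<and> tc = False \<and> t'' = replicate (c - 1 - (b - 1) - 1) False @ True # enc \<gamma>"
      then have "nxt w'' = Some False" using h(3) loc_True_TF by blast
      then obtain w3 where w3: "w'' = False # w3" by (cases w'') (auto simp: nxt_def)
      have ok3: "ok (enc \<alpha>) (enc \<beta>') (replicate (c - 1 - (b - 1) - 1) False @ True # enc \<gamma>) (False # w3)"
        using h(4) H w3 by simp
      obtain a \<alpha>' where al: "\<alpha> = a # \<alpha>'"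
        using ok3 by (cases \<alpha>) auto
      have a0: "0 < a" using pa al by (simp add: pos_def)
      from ok3 al have "ok (replicate (a - 1) False @ True # enc \<alpha>') (enc \<beta>') (replicate (c - 1 - (b - 1) - 1) False @ True # enc \<gamma>) (False # w3)"
        by simp
      then obtain tc' t3 w4 where h3: "replicate (c - 1 - (b - 1) - 1) False @ True # enc \<gamma> = replicate (a - 1) False @ tc' # t3"
        "w3 = replicate (a - 1) False @ w4" "loc False (nxt w4) True tc'" "ok (enc \<alpha>') (enc \<beta>') t3 w4"
        unfolding L0 by blast
      from rep_eq[OF h3(1)] h3(3) loc_TF have "c - 1 - (b - 1) - 1 = a - 1 \<and> tc' = True \<and> enc \<gamma> = t3" by blast
      then have "a + b = c" "t3 = enc \<gamma>" using a0 b0 pc H by auto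
      moreover have "w = replicate b True @ replicate a False @ w4"
        using wb w3 h3(2) a0 by (cases a) auto
      ultimately show ?R using al bl h3(4) by blast
    qed
  qed
next
  assume R: ?R
  have et: "enc (c # \<gamma>) = replicate (c - 1) False @ True # enc \<gamma>" by simp
  show ?L
  proof (cases "\<exists>\<alpha>' w'. \<alpha> = c # \<alpha>' \<and> w = replicate c False @ w' \<and> ok (enc \<alpha>') (enc \<beta>) (enc \<gamma>) w'")
    case True
    then obtain \<alpha>' w' where h: "\<alpha> = c # \<alpha>'" "w = replicate c False @ w'" "ok (enc \<alpha>') (enc \<beta>) (enc \<gamma>) w'"
      by blast
    have "w = False # (replicate (c - 1) False @ w')" using h(2) pc by (cases c) auto
    then show ?L unfolding et using h L0 loc_TT by auto
  next
    case n1: False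
    show ?L
    proof (cases "\<exists>\<beta>' w'. \<beta> = c # \<beta>' \<and> w = replicate c True @ w' \<and> ok (enc \<alpha>) (enc \<beta>') (enc \<gamma>) w'")
      case True
      then obtain \<beta>' w' where h: "\<beta> = c # \<beta>'" "w = replicate c True @ w'" "ok (enc \<alpha>) (enc \<beta>') (enc \<gamma>) w'"
        by blast
      have "w = True # (replicate (c - 1) True @ w')" using h(2) pc by (cases c) auto
      then show ?L unfolding et using h L1 loc_TT by auto
    next
      case False
      with n1 R obtain a \<alpha>' b \<beta>' w' where h: "\<alpha> = a # \<alpha>'" "\<beta> = b # \<beta>'" "a + b = c"
        "w = replicate b True @ replicate a False @ w'" "ok (enc \<alpha>') (enc \<beta>') (enc \<gamma>) w'"
        by blast
      have a0: "0 < a" using pa h(1) by (simp add: pos_def)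
      have b0: "0 < b" using pb h(2) by (simp add: pos_def)
      have w: "w = True # (replicate (b - 1) True @ (False # (replicate (a - 1) False @ w')))"
        using h(4) a0 b0 by (cases a; cases b) auto
      have e2: "replicate (c - 1) False @ True # enc \<gamma> = replicate (b - 1) False @ False # (replicate (a - 1) False @ True # enc \<gamma>)"
      proof -
        have "c - 1 = (b - 1) + Suc (a - 1)" using h(3) a0 b0 by simp
        then have "replicate (c - 1) False = replicate (b - 1) False @ replicate (Suc (a - 1)) False"
          by (simp only: replicate_add)
        then show ?thesis by simp
      qed
      have "ok (replicate (a - 1) False @ True # enc \<alpha>') (enc \<beta>') (replicate (a - 1) False @ True # enc \<gamma>) (False # (replicate (a - 1) False @ w'))"
        unfolding L0 using h(5) loc_TT by blast
      then have "ok (enc \<alpha>) (replicate (b - 1) False @ True # enc \<beta>') (replicate (c - 1) False @ True # enc \<gamma>) w"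
        unfolding w e2 L1 using h(1) by (auto simp: loc_def nxt_def)
      then show ?L using h(2) by simp
    qed
  qed
qed


definition W :: "nat list \<Rightarrow> nat list \<Rightarrow> nat list \<Rightarrow> bool list set" where
  "W \<alpha> \<beta> \<gamma> = {w. ok (enc \<alpha>) (enc \<beta>) (enc \<gamma>) w}"

definition R :: "nat list \<Rightarrow> nat list \<Rightarrow> nat \<Rightarrow> (nat list \<Rightarrow> nat list \<Rightarrow> nat) \<Rightarrow> nat" where
  "R \<alpha> \<beta> c F = (case \<alpha> of [] \<Rightarrow> 0 | a # \<alpha>' \<Rightarrow> if a = c then F \<alpha>' \<beta> else 0)
     + (case \<beta> of [] \<Rightarrow> 0 | b # \<beta>' \<Rightarrow> if b = c then F \<alpha> \<beta>' else 0)
     + (case \<alpha> of [] \<Rightarrow> 0 | a # \<alpha>' \<Rightarrow> (case \<beta> of [] \<Rightarrow> 0 | b # \<beta>' \<Rightarrow> if a + b = c then F \<alpha>' \<beta>' else 0))"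

lemma card_inj_ex: "inj h \<Longrightarrow> card {x. \<exists>y. x = h y \<and> y \<in> S} = card S"
proof -
  assume "inj h"
  have "{x. \<exists>y. x = h y \<and> y \<in> S} = h ` S" by auto
  then show ?thesis using \<open>inj h\<close> by (simp add: card_image inj_on_subset)
qed

lemma cardA: "inj h \<Longrightarrow> card {x. \<exists>\<alpha>'. \<alpha> = c # \<alpha>' \<and> (\<exists>y. x = h y \<and> y \<in> S \<alpha>')}
   = (case \<alpha> of [] \<Rightarrow> 0 | a # \<alpha>' \<Rightarrow> if a = c then card (S \<alpha>') else 0)"
  by (cases \<alpha>) (auto simp: card_inj_ex)

lemma cardC: "inj h \<Longrightarrow> card {x. \<exists>a \<alpha>' b \<beta>'. \<alpha> = a # \<alpha>' \<and> \<beta> = b # \<beta>' \<and> a + b = c \<and> (\<exists>y. x = h y \<and> y \<in> S \<alpha>' \<beta>')}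
   = (case \<alpha> of [] \<Rightarrow> 0 | a # \<alpha>' \<Rightarrow> (case \<beta> of [] \<Rightarrow> 0 | b # \<beta>' \<Rightarrow> if a + b = c then card (S \<alpha>' \<beta>') else 0))"
  by (cases \<alpha>; cases \<beta>) (auto simp: card_inj_ex)

lemma card_Un3: "finite X \<Longrightarrow> finite Y \<Longrightarrow> finite Z \<Longrightarrow> X \<inter> Y = {} \<Longrightarrow> X \<inter> Z = {} \<Longrightarrow> Y \<inter> Z = {} \<Longrightarrow>
  card (X \<union> Y \<union> Z) = card X + card Y + card Z"
  by (simp add: card_Un_disjoint Int_Un_distrib2)

lemma finite_ok: "finite {w. ok u v t w}"
proof -
  have "{w. ok u v t w} \<subseteq> {w. set w \<subseteq> UNIV \<and> length w = length t}"
    using ok_length by fastforce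
  moreover have "finite {w. set w \<subseteq> (UNIV :: bool set) \<and> length w = length t}"
    by (rule finite_lists_length_eq) simp
  ultimately show ?thesis by (rule finite_subset)
qed

lemma inj_app: "inj ((@) p)" by (simp add: inj_def)

lemma card_W_step:
  assumes pa: "pos \<alpha>" and pb: "pos \<beta>" and pc: "0 < c"
  shows "card (W \<alpha> \<beta> (c # \<gamma>)) = R \<alpha> \<beta> c (\<lambda>\<alpha>' \<beta>'. card (W \<alpha>' \<beta>' \<gamma>))"
proof -
  define X1 where "X1 = {x. \<exists>\<alpha>'. \<alpha> = c # \<alpha>' \<and> (\<exists>y. x = (replicate c False @ y) \<and> y \<in> W \<alpha>' \<beta> \<gamma>)}"
  define X2 where "X2 = {x. \<exists>\<beta>'. \<beta> = c # \<beta>' \<and> (\<exists>y. x = (replicate c True @ y) \<and> y \<in> W \<alpha> \<beta>' \<gamma>)}"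
  define X3 where "X3 = {x. \<exists>a \<alpha>' b \<beta>'. \<alpha> = a # \<alpha>' \<and> \<beta> = b # \<beta>' \<and> a + b = c \<and>
      (\<exists>y. x = ((replicate b True @ replicate a False) @ y) \<and> y \<in> W \<alpha>' \<beta>' \<gamma>)}"
  have eq: "W \<alpha> \<beta> (c # \<gamma>) = X1 \<union> X2 \<union> X3"
    unfolding W_def X1_def X2_def X3_def using Wstep[OF pa pb pc] by auto
  have fin: "finite X1" "finite X2" "finite X3"
    using eq finite_ok[of "enc \<alpha>" "enc \<beta>" "enc (c # \<gamma>)"] unfolding W_def
    by (metis finite_Un)+
  have d12: "X1 \<inter> X2 = {}" unfolding X1_def X2_def using pc by (cases c) auto
  have d13: "X1 \<inter> X3 = {}"
  proof -
    have h1: "hd (replicate c False @ y) = False" for y using pc by (cases c) auto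
    have h2: "0 < b \<Longrightarrow> hd ((replicate b True @ z) @ y) = True" for b z y by (cases b) auto
    show ?thesis unfolding X1_def X3_def using pb h1 h2 by (auto simp: pos_def)
  qed
  have d23: "X2 \<inter> X3 = {}" unfolding X2_def X3_def using pa by (auto simp: pos_def)
  have c1: "card X1 = (case \<alpha> of [] \<Rightarrow> 0 | a # \<alpha>' \<Rightarrow> if a = c then card (W \<alpha>' \<beta> \<gamma>) else 0)"
    unfolding X1_def by (rule cardA[OF inj_app])
  have c2: "card X2 = (case \<beta> of [] \<Rightarrow> 0 | b # \<beta>' \<Rightarrow> if b = c then card (W \<alpha> \<beta>' \<gamma>) else 0)"
    unfolding X2_def by (rule cardA[OF inj_app])
  have c3: "card X3 = (case \<alpha> of [] \<Rightarrow> 0 | a # \<alpha>' \<Rightarrow> (case \<beta> of [] \<Rightarrow> 0 | b # \<beta>' \<Rightarrow> if a + b = c then card (W \<alpha>' \<beta>' \<gamma>) else 0))"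
  proof (cases \<alpha>; cases \<beta>)
    fix a \<alpha>' b \<beta>' assume h: "\<alpha> = a # \<alpha>'" "\<beta> = b # \<beta>'"
    have "X3 = (if a + b = c then ((@) (replicate b True @ replicate a False)) ` W \<alpha>' \<beta>' \<gamma> else {})"
      unfolding X3_def h by auto
    then show ?thesis using h card_image[OF inj_on_subset[OF inj_app[of "replicate b True @ replicate a False"]], of "W \<alpha>' \<beta>' \<gamma>"] by simp
  qed (auto simp: X3_def)
  show ?thesis unfolding eq R_def
    by (simp add: card_Un3[OF fin d12 d13 d23] c1 c2 c3)
qed


abbreviation OS where "OS \<equiv> overlapping_shuffles"

lemma sum0a: "length f = length \<alpha> \<Longrightarrow>
  (\<Sum>i<Suc (length \<alpha>). if (0 # map Suc f) ! i = 0 then (a # \<alpha>) ! i else 0) = a"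
  unfolding sum.lessThan_Suc_shift by simp

lemma sum0b: "length f = length \<alpha> \<Longrightarrow>
  (\<Sum>i<Suc (length \<alpha>). if (0 # map Suc f) ! i = Suc k then (a # \<alpha>) ! i else 0)
   = (\<Sum>i<length \<alpha>. if f ! i = k then \<alpha> ! i else 0)"
  unfolding sum.lessThan_Suc_shift by (auto intro!: sum.cong)

lemma sum1a: "length f = length \<alpha> \<Longrightarrow>
  (\<Sum>i<length \<alpha>. if (map Suc f) ! i = 0 then \<alpha> ! i else 0) = 0"
  by simp

lemma sum1b: "length f = length \<alpha> \<Longrightarrow>
  (\<Sum>i<length \<alpha>. if (map Suc f) ! i = Suc k then \<alpha> ! i else 0)
   = (\<Sum>i<length \<alpha>. if f ! i = k then \<alpha> ! i else 0)"
  by (rule sum.cong) auto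

lemma cover_iff: "insert 0 (Suc ` X) = {0..<Suc L} \<longleftrightarrow> X = {0..<L}"
proof -
  have "{0..<Suc L} = insert 0 (Suc ` {0..<L})" by (rule atLeast0_lessThan_Suc_eq_insert_0)
  moreover have "insert 0 (Suc ` X) = insert 0 (Suc ` Y) \<longleftrightarrow> X = Y" for Y :: "nat set"
  proof
    assume "insert 0 (Suc ` X) = insert 0 (Suc ` Y)"
    then have "Suc ` X = Suc ` Y" by (metis Diff_insert_absorb image_iff nat.distinct(1))
    then show "X = Y" by (simp add: inj_image_eq_iff)
  qed simp
  ultimately show ?thesis by metis
qed

lemma all_Suc_split: "(\<forall>k < Suc L. P k) \<longleftrightarrow> P 0 \<and> (\<forall>k<L. P (Suc k))"
  by (rule All_less_Suc2)

lemma cover_iff2: "insert 0 (Suc ` A \<union> Suc ` B) = {0..<Suc L} \<longleftrightarrow> A \<union> B = {0..<L}"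
  using cover_iff[of "A \<union> B" L] by (simp add: image_Un)

lemma OS_len: "(f, g) \<in> OS \<alpha> \<beta> \<gamma> \<Longrightarrow> length f = length \<alpha> \<and> length g = length \<beta>"
  by (simp add: overlapping_shuffles_def)

definition Sf :: "nat list \<Rightarrow> nat list \<Rightarrow> nat \<Rightarrow> nat" where
  "Sf f \<alpha> k = (\<Sum>i<length \<alpha>. if f ! i = k then \<alpha> ! i else 0)"

lemma OS_mem: "(f, g) \<in> OS \<alpha> \<beta> \<gamma> \<longleftrightarrow> length f = length \<alpha> \<and> length g = length \<beta> \<and>
   sorted_wrt (<) f \<and> sorted_wrt (<) g \<and> set f \<union> set g = {0..<length \<gamma>} \<and>
   (\<forall>k<length \<gamma>. \<gamma> ! k = Sf f \<alpha> k + Sf g \<beta> k)"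
  unfolding overlapping_shuffles_def Sf_def by simp

lemma Sf0a: "length f = length \<alpha> \<Longrightarrow> Sf (0 # map Suc f) (a # \<alpha>) 0 = a"
  unfolding Sf_def length_Cons by (rule sum0a)

lemma Sf0b: "length f = length \<alpha> \<Longrightarrow> Sf (0 # map Suc f) (a # \<alpha>) (Suc k) = Sf f \<alpha> k"
  unfolding Sf_def length_Cons by (rule sum0b)

lemma Sf1a: "length f = length \<alpha> \<Longrightarrow> Sf (map Suc f) \<alpha> 0 = 0"
  unfolding Sf_def by (rule sum1a)

lemma Sf1b: "length f = length \<alpha> \<Longrightarrow> Sf (map Suc f) \<alpha> (Suc k) = Sf f \<alpha> k"
  unfolding Sf_def by (rule sum1b)

lemma sorted0: "sorted_wrt (<) (0 # map Suc f) \<longleftrightarrow> sorted_wrt (<) f"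
  by (simp add: sorted_wrt_map)

lemma sorted1: "sorted_wrt (<) (map Suc f) \<longleftrightarrow> sorted_wrt (<) f"
  by (simp add: sorted_wrt_map)

lemma cov1: "set (0 # map Suc f) \<union> set (map Suc g) = {0..<length (c # \<gamma>)} \<longleftrightarrow> set f \<union> set g = {0..<length \<gamma>}"
proof -
  have "set (0 # map Suc f) \<union> set (map Suc g) = insert 0 (Suc ` set f \<union> Suc ` set g)" by simp
  then show ?thesis using cover_iff2[of "set f" "set g" "length \<gamma>"] by simp
qed

lemma cov3: "set (0 # map Suc f) \<union> set (0 # map Suc g) = {0..<length (c # \<gamma>)} \<longleftrightarrow> set f \<union> set g = {0..<length \<gamma>}"
proof -
  have "set (0 # map Suc f) \<union> set (0 # map Suc g) = insert 0 (Suc ` set f \<union> Suc ` set g)" by auto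
  then show ?thesis using cover_iff2[of "set f" "set g" "length \<gamma>"] by simp
qed

lemma allk: "(\<forall>k<length (c # \<gamma>). P k) \<longleftrightarrow> P 0 \<and> (\<forall>k<length \<gamma>. P (Suc k))"
  by (simp only: length_Cons All_less_Suc2)

lemma shape1: "(0 # map Suc f, map Suc g) \<in> OS (a # \<alpha>) \<beta> (c # \<gamma>) \<longleftrightarrow> a = c \<and> (f, g) \<in> OS \<alpha> \<beta> \<gamma>"
proof (cases "length f = length \<alpha> \<and> length g = length \<beta>")
  case True
  then have lf: "length f = length \<alpha>" and lg: "length g = length \<beta>" by auto
  have "(\<forall>k<length (c # \<gamma>). (c # \<gamma>) ! k = Sf (0 # map Suc f) (a # \<alpha>) k + Sf (map Suc g) \<beta> k)
     \<longleftrightarrow> c = a \<and> (\<forall>k<length \<gamma>. \<gamma> ! k = Sf f \<alpha> k + Sf g \<beta> k)"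
    unfolding allk using Sf0a[OF lf] Sf0b[OF lf] Sf1a[OF lg] Sf1b[OF lg] by simp
  then show ?thesis unfolding OS_mem sorted0 sorted1 cov1 using lf lg by auto
next
  case False
  then show ?thesis by (auto simp: OS_mem)
qed

lemma shape3: "(0 # map Suc f, 0 # map Suc g) \<in> OS (a # \<alpha>) (b # \<beta>) (c # \<gamma>) \<longleftrightarrow> a + b = c \<and> (f, g) \<in> OS \<alpha> \<beta> \<gamma>"
proof (cases "length f = length \<alpha> \<and> length g = length \<beta>")
  case True
  then have lf: "length f = length \<alpha>" and lg: "length g = length \<beta>" by auto
  have "(\<forall>k<length (c # \<gamma>). (c # \<gamma>) ! k = Sf (0 # map Suc f) (a # \<alpha>) k + Sf (0 # map Suc g) (b # \<beta>) k)
     \<longleftrightarrow> c = a + b \<and> (\<forall>k<length \<gamma>. \<gamma> ! k = Sf f \<alpha> k + Sf g \<beta> k)"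
    unfolding allk using Sf0a[OF lf] Sf0b[OF lf] Sf0a[OF lg] Sf0b[OF lg] by simp
  then show ?thesis unfolding OS_mem sorted0 cov3 using lf lg by auto
next
  case False
  then show ?thesis by (auto simp: OS_mem)
qed

lemma shape0: "(map Suc f, map Suc g) \<notin> OS \<alpha> \<beta> (c # \<gamma>)"
proof
  assume "(map Suc f, map Suc g) \<in> OS \<alpha> \<beta> (c # \<gamma>)"
  then have "0 \<in> set (map Suc f) \<union> set (map Suc g)" unfolding OS_mem by auto
  then show False by auto
qed

lemma OS_swap: "(f, g) \<in> OS \<alpha> \<beta> \<gamma> \<longleftrightarrow> (g, f) \<in> OS \<beta> \<alpha> \<gamma>"
  unfolding overlapping_shuffles_def by (auto simp: Un_commute add.commute)

lemma shape2: "(map Suc f, 0 # map Suc g) \<in> OS \<alpha> (b # \<beta>) (c # \<gamma>) \<longleftrightarrow> b = c \<and> (f, g) \<in> OS \<alpha> \<beta> \<gamma>"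
  using shape1[of g f b \<beta> \<alpha> c \<gamma>] OS_swap by metis

lemma sorted_shape: "sorted_wrt (<) (f :: nat list) \<Longrightarrow> (\<exists>f'. f = map Suc f') \<or> (\<exists>f'. f = 0 # map Suc f')"
proof (cases f)
  case Nil then show ?thesis by auto
next
  case (Cons x r)
  assume s: "sorted_wrt (<) f"
  then have "\<forall>y\<in>set r. 0 < y" using Cons by auto
  then have r: "r = map Suc (map (\<lambda>y. y - 1) r)" by (induction r) auto
  show ?thesis
  proof (cases x)
    case 0 then show ?thesis using Cons r by blast
  next
    case (Suc x')
    then have "f = map Suc (map (\<lambda>y. y - 1) f)" using Cons r by (metis Suc_diff_1 list.simps(9) zero_less_Suc)
    then show ?thesis by blast
  qed
qed

lemma finite_OS: "finite (OS \<alpha> \<beta> \<gamma>)"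
proof -
  have "OS \<alpha> \<beta> \<gamma> \<subseteq> {f. set f \<subseteq> {0..<length \<gamma>} \<and> length f = length \<alpha>} \<times> {g. set g \<subseteq> {0..<length \<gamma>} \<and> length g = length \<beta>}"
    unfolding overlapping_shuffles_def by auto
  moreover have "finite ({f. set f \<subseteq> {0..<length \<gamma>} \<and> length f = length \<alpha>} \<times> {g. set g \<subseteq> {0..<length \<gamma>} \<and> length g = length \<beta>})"
    by (intro finite_cartesian_product finite_lists_length_eq) auto
  ultimately show ?thesis by (rule finite_subset)
qed

lemma card_OS_step: "card (OS \<alpha> \<beta> (c # \<gamma>)) = R \<alpha> \<beta> c (\<lambda>\<alpha>' \<beta>'. card (OS \<alpha>' \<beta>' \<gamma>))"
proof -
  define h1 where "h1 = (\<lambda>(f :: nat list, g :: nat list). (0 # map Suc f, map Suc g))"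
  define h2 where "h2 = (\<lambda>(f :: nat list, g :: nat list). (map Suc f, 0 # map Suc g))"
  define h3 where "h3 = (\<lambda>(f :: nat list, g :: nat list). (0 # map Suc f, 0 # map Suc g))"
  have i1: "inj h1" and i2: "inj h2" and i3: "inj h3"
    unfolding h1_def h2_def h3_def inj_def by (auto simp: inj_map_eq_map)
  define Y1 where "Y1 = {x. \<exists>\<alpha>'. \<alpha> = c # \<alpha>' \<and> (\<exists>y. x = h1 y \<and> y \<in> OS \<alpha>' \<beta> \<gamma>)}"
  define Y2 where "Y2 = {x. \<exists>\<beta>'. \<beta> = c # \<beta>' \<and> (\<exists>y. x = h2 y \<and> y \<in> OS \<alpha> \<beta>' \<gamma>)}"
  define Y3 where "Y3 = {x. \<exists>a \<alpha>' b \<beta>'. \<alpha> = a # \<alpha>' \<and> \<beta> = b # \<beta>' \<and> a + b = c \<and> (\<exists>y. x = h3 y \<and> y \<in> OS \<alpha>' \<beta>' \<gamma>)}"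
  have eq: "OS \<alpha> \<beta> (c # \<gamma>) = Y1 \<union> Y2 \<union> Y3"
  proof
    show "OS \<alpha> \<beta> (c # \<gamma>) \<subseteq> Y1 \<union> Y2 \<union> Y3"
    proof
      fix p assume p: "p \<in> OS \<alpha> \<beta> (c # \<gamma>)"
      obtain f g where fg: "p = (f, g)" by (cases p)
      have sf: "sorted_wrt (<) f" and sg: "sorted_wrt (<) g"
        using p fg by (auto simp: overlapping_shuffles_def)
      have len: "length f = length \<alpha>" "length g = length \<beta>" using p fg OS_len by auto
      from sorted_shape[OF sf] sorted_shape[OF sg] show "p \<in> Y1 \<union> Y2 \<union> Y3"
      proof (elim disjE exE)
        fix f' g' assume "f = map Suc f'" "g = map Suc g'"
        then show ?thesis using p fg shape0 by auto
      next
        fix f' g' assume F: "f = 0 # map Suc f'" and G: "g = map Suc g'"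
        obtain a \<alpha>' where al: "\<alpha> = a # \<alpha>'" using len F by (cases \<alpha>) auto
        have "a = c \<and> (f', g') \<in> OS \<alpha>' \<beta> \<gamma>" using shape1 p fg F G al by metis
        then have "p \<in> Y1" unfolding Y1_def h1_def using al fg F G by auto
        then show ?thesis by blast
      next
        fix f' g' assume F: "f = map Suc f'" and G: "g = 0 # map Suc g'"
        obtain b \<beta>' where bl: "\<beta> = b # \<beta>'" using len G by (cases \<beta>) auto
        have "b = c \<and> (f', g') \<in> OS \<alpha> \<beta>' \<gamma>" using shape2 p fg F G bl by metis
        then have "p \<in> Y2" unfolding Y2_def h2_def using bl fg F G by auto
        then show ?thesis by blast
      next
        fix f' g' assume F: "f = 0 # map Suc f'" and G: "g = 0 # map Suc g'"
        obtain a \<alpha>' where al: "\<alpha> = a # \<alpha>'" using len F by (cases \<alpha>) auto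
        obtain b \<beta>' where bl: "\<beta> = b # \<beta>'" using len G by (cases \<beta>) auto
        have "a + b = c \<and> (f', g') \<in> OS \<alpha>' \<beta>' \<gamma>" using shape3 p fg F G al bl by metis
        then have "p \<in> Y3" unfolding Y3_def h3_def using al bl fg F G by auto
        then show ?thesis by blast
      qed
    qed
  next
    show "Y1 \<union> Y2 \<union> Y3 \<subseteq> OS \<alpha> \<beta> (c # \<gamma>)"
      unfolding Y1_def Y2_def Y3_def h1_def h2_def h3_def
      using shape1 shape2 shape3 by fastforce
  qed
  have fin: "finite Y1" "finite Y2" "finite Y3"
    using eq finite_OS[of \<alpha> \<beta> "c # \<gamma>"] by (metis finite_Un)+
  have d12: "Y1 \<inter> Y2 = {}" unfolding Y1_def Y2_def h1_def h2_def by auto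
  have d13: "Y1 \<inter> Y3 = {}" unfolding Y1_def Y3_def h1_def h3_def by auto
  have d23: "Y2 \<inter> Y3 = {}" unfolding Y2_def Y3_def h2_def h3_def by auto
  have c1: "card Y1 = (case \<alpha> of [] \<Rightarrow> 0 | a # \<alpha>' \<Rightarrow> if a = c then card (OS \<alpha>' \<beta> \<gamma>) else 0)"
    unfolding Y1_def by (rule cardA[OF i1])
  have c2: "card Y2 = (case \<beta> of [] \<Rightarrow> 0 | b # \<beta>' \<Rightarrow> if b = c then card (OS \<alpha> \<beta>' \<gamma>) else 0)"
    unfolding Y2_def by (rule cardA[OF i2])
  have c3: "card Y3 = (case \<alpha> of [] \<Rightarrow> 0 | a # \<alpha>' \<Rightarrow> (case \<beta> of [] \<Rightarrow> 0 | b # \<beta>' \<Rightarrow> if a + b = c then card (OS \<alpha>' \<beta>' \<gamma>) else 0))"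
    unfolding Y3_def by (rule cardC[OF i3])
  show ?thesis unfolding eq R_def
    by (simp add: card_Un3[OF fin d12 d13 d23] c1 c2 c3)
qed


lemma R_cong: "pos \<alpha> \<Longrightarrow> pos \<beta> \<Longrightarrow> (\<And>\<alpha>' \<beta>'. pos \<alpha>' \<Longrightarrow> pos \<beta>' \<Longrightarrow> F \<alpha>' \<beta>' = G \<alpha>' \<beta>') \<Longrightarrow>
  R \<alpha> \<beta> c F = R \<alpha> \<beta> c G"
  by (cases \<alpha>; cases \<beta>) (auto simp: R_def pos_def)

lemma enc_Nil_iff: "enc \<alpha> = [] \<longleftrightarrow> \<alpha> = []"
  by (cases \<alpha>) auto

lemma OS_W: "pos \<alpha> \<Longrightarrow> pos \<beta> \<Longrightarrow> pos \<gamma> \<Longrightarrow> card (OS \<alpha> \<beta> \<gamma>) = card (W \<alpha> \<beta> \<gamma>)"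
proof (induction \<gamma> arbitrary: \<alpha> \<beta>)
  case Nil
  have "OS \<alpha> \<beta> [] = (if \<alpha> = [] \<and> \<beta> = [] then {([], [])} else {})"
    unfolding overlapping_shuffles_def by auto
  moreover have "W \<alpha> \<beta> [] = (if \<alpha> = [] \<and> \<beta> = [] then {[]} else {})"
    unfolding W_def by (auto simp: ok_Nil enc_Nil_iff elim: ok.elims)
  ultimately show ?case by simp
next
  case (Cons c \<gamma>)
  have c0: "0 < c" and pg: "pos \<gamma>" using Cons.prems(3) by (auto simp: pos_def)
  have "card (OS \<alpha> \<beta> (c # \<gamma>)) = R \<alpha> \<beta> c (\<lambda>\<alpha>' \<beta>'. card (OS \<alpha>' \<beta>' \<gamma>))" by (rule card_OS_step)
  also have "\<dots> = R \<alpha> \<beta> c (\<lambda>\<alpha>' \<beta>'. card (W \<alpha>' \<beta>' \<gamma>))"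
    by (rule R_cong[OF Cons.prems(1,2)]) (use Cons.IH pg in auto)
  also have "\<dots> = card (W \<alpha> \<beta> (c # \<gamma>))" by (rule card_W_step[OF Cons.prems(1,2) c0, symmetric])
  finally show ?case .
qed

lemma maxint: "a \<le> b \<Longrightarrow> Max {a..b} = (b :: nat)"
  by (rule Max_eqI) auto

lemma maxconn: "Max ` conn A = {x \<in> A. Suc x \<notin> A}"
proof
  show "Max ` conn A \<subseteq> {x \<in> A. Suc x \<notin> A}"
  proof
    fix y assume "y \<in> Max ` conn A"
    then obtain B where B: "B \<in> conn A" "y = Max B" by blast
    from B(1) have Bne: "B \<noteq> {}" and BA: "B \<subseteq> A" and Bi: "\<exists>a b. B = {a..b}"
      and mx: "\<And>C. C \<subseteq> A \<Longrightarrow> (\<exists>a b. C = {a..b}) \<Longrightarrow> B \<subseteq> C \<Longrightarrow> C = B"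
      unfolding conn_def mem_Collect_eq by blast+
    from Bi obtain a b where ab: "B = {a..b}" by blast
    have le: "a \<le> b" using ab Bne by simp
    have yb: "y = b" using B(2) ab le maxint by simp
    have "b \<in> A" using ab le BA by auto
    moreover have "Suc b \<notin> A"
    proof
      assume S: "Suc b \<in> A"
      have "{a..Suc b} \<subseteq> A"
      proof
        fix z assume "z \<in> {a..Suc b}"
        then have "z \<in> {a..b} \<or> z = Suc b" by (auto simp: le_Suc_eq)
        then show "z \<in> A" using S BA ab by auto
      qed
      moreover have "\<exists>a' b'. {a..Suc b} = {a'..b'}" by blast
      moreover have "B \<subseteq> {a..Suc b}" using ab by auto
      ultimately have "{a..Suc b} = B" by (rule mx)
      then have "Suc b \<in> B" using le by auto
      then show False using ab by simp
    qed
    ultimately show "y \<in> {x \<in> A. Suc x \<notin> A}" using yb by simp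
  qed
next
  show "{x \<in> A. Suc x \<notin> A} \<subseteq> Max ` conn A"
  proof
    fix x assume x: "x \<in> {x \<in> A. Suc x \<notin> A}"
    define a where "a = (LEAST a. {a..x} \<subseteq> A)"
    have ex: "{x..x} \<subseteq> A" using x by simp
    have aA: "{a..x} \<subseteq> A" unfolding a_def by (rule LeastI[where P = "\<lambda>a. {a..x} \<subseteq> A", OF ex])
    have ax: "a \<le> x" unfolding a_def by (rule Least_le[where P = "\<lambda>a. {a..x} \<subseteq> A", OF ex])
    have amin: "\<And>c. {c..x} \<subseteq> A \<Longrightarrow> a \<le> c" unfolding a_def by (rule Least_le[where P = "\<lambda>a. {a..x} \<subseteq> A"])
    have mx: "C = {a..x}" if C: "C \<subseteq> A" "\<exists>a b. C = {a..b}" "{a..x} \<subseteq> C" for C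
    proof -
      from C(2) obtain c d where cd: "C = {c..d}" by blast
      have "a \<in> C" "x \<in> C" using C(3) ax by auto
      then have ca: "c \<le> a" and xd: "x \<le> d" using cd by auto
      have dx: "d \<le> x"
      proof (rule ccontr)
        assume "\<not> d \<le> x"
        then have "Suc x \<in> C" using cd ca ax by simp
        then show False using C(1) x by auto
      qed
      have "{c..x} \<subseteq> C" using cd dx xd by auto
      then have "a \<le> c" using C(1) amin by blast
      then show "C = {a..x}" using cd ca dx xd by simp
    qed
    have "{a..x} \<in> conn A"
      unfolding conn_def mem_Collect_eq
    proof (intro conjI allI impI)
      show "{a..x} \<noteq> {}" using ax by simp
      show "{a..x} \<subseteq> A" by (rule aA)
      show "\<exists>a' b. {a..x} = {a'..b}" by blast
      fix C assume "C \<subseteq> A \<and> (\<exists>a b. C = {a..b}) \<and> {a..x} \<subseteq> C"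
      then show "C = {a..x}" using mx by blast
    qed
    moreover have "Max {a..x} = x" using ax by (rule maxint)
    ultimately show "x \<in> Max ` conn A" by (metis imageI)
  qed
qed

lemma c1_char: "c1 N A = {x \<in> A. Suc x \<notin> A \<and> x \<noteq> N}"
  unfolding c1_def maxconn by auto

lemma c2_char: "A \<subseteq> nset N \<Longrightarrow> c2 N A = {x. 1 \<le> x \<and> x < N \<and> x \<notin> A \<and> Suc x \<in> A}"
  unfolding c2_def maxconn nset_def by auto


lemma ss: "sorted_wrt (<) (sorted_list_of_set (B :: nat set))"
  by simp

definition rk :: "nat set \<Rightarrow> nat \<Rightarrow> nat" where "rk B x = card {y \<in> B. y < x}"

lemma r1: "finite B \<Longrightarrow> i < card B \<Longrightarrow> sorted_list_of_set B ! i \<in> B"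
  by (metis length_sorted_list_of_set nth_mem set_sorted_list_of_set)

lemma r2: assumes fB: "finite (B :: nat set)" and i: "i < card B"
  shows "rk B (sorted_list_of_set B ! i) = i"
proof -
  let ?L = "sorted_list_of_set B"
  have len: "length ?L = card B" by simp
  have st: "sorted_wrt (<) ?L" by (rule ss)
  have dist: "distinct ?L" by simp
  have sL: "set ?L = B" using fB by simp
  have "{y \<in> B. y < ?L ! i} = (\<lambda>j. ?L ! j) ` {..<i}"
  proof
    show "{y \<in> B. y < ?L ! i} \<subseteq> (\<lambda>j. ?L ! j) ` {..<i}"
    proof
      fix y assume y: "y \<in> {y \<in> B. y < ?L ! i}"
      then obtain j where j: "j < length ?L" "y = ?L ! j" using sL by (metis (no_types, lifting) in_set_conv_nth mem_Collect_eq)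
      have "j < i"
      proof (rule ccontr)
        assume "\<not> j < i"
        then have "i = j \<or> i < j" by auto
        then have "?L ! i \<le> ?L ! j" using sorted_wrt_nth_less[OF st _ j(1)] by fastforce
        then show False using y j by auto
      qed
      then show "y \<in> (\<lambda>j. ?L ! j) ` {..<i}" using j by auto
    qed
  next
    show "(\<lambda>j. ?L ! j) ` {..<i} \<subseteq> {y \<in> B. y < ?L ! i}"
    proof
      fix y assume "y \<in> (\<lambda>j. ?L ! j) ` {..<i}"
      then obtain j where j: "j < i" "y = ?L ! j" by auto
      have "?L ! j < ?L ! i" using sorted_wrt_nth_less[OF st j(1)] i len by simp
      moreover have "?L ! j \<in> B" using j i len sL by (metis less_trans nth_mem)
      ultimately show "y \<in> {y \<in> B. y < ?L ! i}" using j by simp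
    qed
  qed
  moreover have "inj_on (\<lambda>j. ?L ! j) {..<i}"
    using dist i len by (auto simp: inj_on_def nth_eq_iff_index_eq)
  ultimately show ?thesis unfolding rk_def by (simp add: card_image)
qed

lemma r3: assumes fB: "finite (B :: nat set)" and x: "x \<in> B"
  shows "sorted_list_of_set B ! rk B x = x"
proof -
  let ?L = "sorted_list_of_set B"
  obtain j where j: "j < length ?L" "x = ?L ! j" using x fB by (metis in_set_conv_nth set_sorted_list_of_set)
  then have "rk B x = j" using r2[OF fB, of j] by simp
  then show ?thesis using j by simp
qed

lemma rk_less: "finite B \<Longrightarrow> x \<in> B \<Longrightarrow> rk B x < card B"
  unfolding rk_def by (rule psubset_card_mono) auto

lemma shuf_char:
  assumes A: "A \<subseteq> nset (m + n)" and cA: "card A = n"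
    and I: "I \<subseteq> nset (m - 1)" and J: "J \<subseteq> nset (n - 1)"
  shows "x \<in> shuf_set m n A I J \<longleftrightarrow> x \<in> nset (m + n) \<and>
     (if x \<in> A then Suc (rk A x) \<in> J else Suc (rk (nset (m + n) - A) x) \<in> I)"
proof -
  let ?Ac = "nset (m + n) - A"
  have fA: "finite A" and fAc: "finite ?Ac" using A by (auto simp: nset_def finite_subset)
  have cAc: "card ?Ac = m" using A cA by (simp add: card_Diff_subset nset_def finite_subset)
  have disj: "A \<inter> ?Ac = {}" by auto
  show ?thesis
  proof
    assume "x \<in> shuf_set m n A I J"
    then consider (a) i where "i \<in> I" "x = sorted_list_of_set ?Ac ! (i - 1)"
      | (b) j where "j \<in> J" "x = sorted_list_of_set A ! (j - 1)"
      unfolding shuf_set_def by blast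
    then show "x \<in> nset (m + n) \<and> (if x \<in> A then Suc (rk A x) \<in> J else Suc (rk ?Ac x) \<in> I)"
    proof cases
      case a
      have "i \<in> nset (m - 1)" using a(1) I by blast
      then have i: "1 \<le> i" "i - 1 < card ?Ac" using cAc by (auto simp: nset_def)
      have xA: "x \<in> ?Ac" using r1[OF fAc i(2)] a(2) by simp
      have "rk ?Ac x = i - 1" using r2[OF fAc i(2)] a(2) by simp
      then have "Suc (rk ?Ac x) \<in> I" using a(1) i(1) by simp
      then show ?thesis using xA by simp
    next
      case b
      have "j \<in> nset (n - 1)" using b(1) J by blast
      then have j: "1 \<le> j" "j - 1 < card A" using cA by (auto simp: nset_def)
      have xA: "x \<in> A" using r1[OF fA j(2)] b(2) by simp
      have "rk A x = j - 1" using r2[OF fA j(2)] b(2) by simp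
      then have "Suc (rk A x) \<in> J" using b(1) j(1) by simp
      then show ?thesis using xA A by auto
    qed
  next
    assume H: "x \<in> nset (m + n) \<and> (if x \<in> A then Suc (rk A x) \<in> J else Suc (rk ?Ac x) \<in> I)"
    show "x \<in> shuf_set m n A I J"
    proof (cases "x \<in> A")
      case True
      then have "Suc (rk A x) \<in> J" using H by simp
      moreover have "sorted_list_of_set A ! (Suc (rk A x) - 1) = x" using r3[OF fA True] by simp
      ultimately have "x \<in> (\<lambda>j. sorted_list_of_set A ! (j - 1)) ` J" by (metis image_eqI)
      then show ?thesis unfolding shuf_set_def by (rule UnI2)
    next
      case False
      then have xc: "x \<in> ?Ac" using H by simp
      have "Suc (rk ?Ac x) \<in> I" using H False by simp
      moreover have "sorted_list_of_set ?Ac ! (Suc (rk ?Ac x) - 1) = x" using r3[OF fAc xc] by simp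
      ultimately have "x \<in> (\<lambda>i. sorted_list_of_set ?Ac ! (i - 1)) ` I" by (metis image_eqI)
      then show ?thesis unfolding shuf_set_def by (rule UnI1)
    qed
  qed
qed

fun ds :: "nat list \<Rightarrow> nat list" where
  "ds (x # y # r) = (y - x) # ds (y # r)"
| "ds _ = []"

lemma ds_map: "map (\<lambda>i. xs ! (i + 1) - xs ! i) [0..<length xs - 1] = ds xs"
proof (induction xs rule: ds.induct)
  case (1 x y r)
  have "map (\<lambda>i. (x # y # r) ! (i + 1) - (x # y # r) ! i) [0..<length (x # y # r) - 1]
      = map (\<lambda>i. (x # y # r) ! (i + 1) - (x # y # r) ! i) [0..<Suc (length (y # r) - 1)]" by simp
  also have "\<dots> = (y - x) # map (\<lambda>i. (y # r) ! (i + 1) - (y # r) ! i) [0..<length (y # r) - 1]"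
    by (simp only: map_upt_Suc) simp
  finally show ?case using 1 by simp
qed auto

lemma comp_ds: "0 < N \<Longrightarrow> comp N S = ds (0 # sorted_list_of_set S @ [N])"
  unfolding comp_def using ds_map[of "0 # sorted_list_of_set S @ [N]"] by simp

lemma map_false: "(\<And>i. i \<in> set xs \<Longrightarrow> \<not> P i) \<Longrightarrow> map P xs = replicate (length xs) False"
  by (induction xs) auto

lemma enc_ds: "sorted_wrt (<) L \<Longrightarrow> (\<forall>l\<in>set L. a < l \<and> l < N) \<Longrightarrow> a < N \<Longrightarrow>
  pos (ds (a # L @ [N])) \<and> enc (ds (a # L @ [N])) = map (\<lambda>i. i \<in> set L \<or> i = N) [Suc a..<Suc N]"
proof (induction L arbitrary: a)
  case Nil
  have "[Suc a..<Suc N] = [Suc a..<N] @ [N]" using Nil by simp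
  moreover have "map (\<lambda>i. i = N) [Suc a..<N] = replicate (N - Suc a) False"
    by (subst map_false) auto
  ultimately show ?case using Nil by (simp add: pos_def)
next
  case (Cons l L)
  have lN: "l < N" and al: "a < l" using Cons.prems by auto
  have IH: "pos (ds (l # L @ [N])) \<and> enc (ds (l # L @ [N])) = map (\<lambda>i. i \<in> set L \<or> i = N) [Suc l..<Suc N]"
    using Cons.prems by (intro Cons.IH) auto
  have up: "[Suc a..<Suc N] = [Suc a..<l] @ l # [Suc l..<Suc N]"
    using al lN by (metis Suc_leI le_SucI less_imp_le_nat upt_conv_Cons upt_add_eq_append le_add_diff_inverse less_Suc_eq)
  have m1: "map (\<lambda>i. i \<in> set (l # L) \<or> i = N) [Suc a..<l] = replicate (l - Suc a) False"
    using Cons.prems lN by (subst map_false) auto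
  have m2: "map (\<lambda>i. i \<in> set (l # L) \<or> i = N) [Suc l..<Suc N] = map (\<lambda>i. i \<in> set L \<or> i = N) [Suc l..<Suc N]"
    by (rule map_cong) auto
  show ?case using IH al up m1 m2 by (simp add: pos_def)
qed

lemma enc_comp: assumes "S \<subseteq> nset (N - 1)"
  shows "pos (comp N S) \<and> enc (comp N S) = map (\<lambda>i. i \<in> S \<or> i = N) [1..<Suc N]"
proof (cases "N = 0")
  case True then show ?thesis by (simp add: comp_def pos_def)
next
  case False
  have fS: "finite S" using assms by (auto simp: nset_def finite_subset)
  have "pos (ds (0 # sorted_list_of_set S @ [N])) \<and> enc (ds (0 # sorted_list_of_set S @ [N]))
     = map (\<lambda>i. i \<in> set (sorted_list_of_set S) \<or> i = N) [Suc 0..<Suc N]"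
  proof (intro enc_ds)
    show "\<forall>l\<in>set (sorted_list_of_set S). 0 < l \<and> l < N"
    proof
      fix l assume "l \<in> set (sorted_list_of_set S)"
      then have "l \<in> S" using fS by simp
      then have "l \<in> nset (N - 1)" using assms by blast
      then show "0 < l \<and> l < N" using False by (auto simp: nset_def)
    qed
  qed (use False in auto)
  then show ?thesis using False fS by (simp add: comp_ds)
qed

lemma enc_flags: assumes "I \<subseteq> nset (m - 1)"
  shows "pos (comp m (nset (m - 1) - I)) \<and> enc (comp m (nset (m - 1) - I)) = map (\<lambda>i. i \<notin> I) [1..<Suc m]"
proof -
  have "map (\<lambda>i. i \<in> nset (m - 1) - I \<or> i = m) [1..<Suc m] = map (\<lambda>i. i \<notin> I) [1..<Suc m]"
    using assms by (intro map_cong) (auto simp: nset_def)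
  then show ?thesis using enc_comp[of "nset (m - 1) - I" m] by auto
qed


fun mrg :: "bool list \<Rightarrow> bool list \<Rightarrow> bool list \<Rightarrow> bool list" where
  "mrg u v [] = []"
| "mrg u v (x # w) = (if x then hd v # mrg u (tl v) w else hd u # mrg (tl u) v w)"

lemma ok_char: "ok u v t w \<longleftrightarrow> length t = length w \<and> length (filter Not w) = length u \<and>
   length (filter id w) = length v \<and>
   (\<forall>p < length w. loc (w ! p) (nxt (drop (Suc p) w)) (mrg u v w ! p) (t ! p))"
proof (induction w arbitrary: u v t)
  case Nil
  then show ?case by (auto simp: ok_Nil)
next
  case (Cons x w)
  show ?case
  proof (cases t)
    case Nil then show ?thesis by simp
  next
    case (Cons tc t')
    show ?thesis
    proof (cases x)
      case True
      show ?thesis using Cons True Cons.IH[of u "tl v" t']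
        by (cases v) (auto simp: All_less_Suc2)
    next
      case False
      show ?thesis using Cons False Cons.IH[of "tl u" v t']
        by (cases u) (auto simp: All_less_Suc2)
    qed
  qed
qed

lemma filter_take_less: "p < length w \<Longrightarrow> w ! p \<Longrightarrow> length (filter id (take p w)) < length (filter id w)"
proof -
  assume p: "p < length w" "w ! p"
  have "take (Suc p) w = take p w @ [w ! p]" using p by (simp add: take_Suc_conv_app_nth)
  then have "length (filter id (take (Suc p) w)) = Suc (length (filter id (take p w)))" using p by simp
  moreover have "length (filter id (take (Suc p) w)) \<le> length (filter id w)"
    by (metis append_take_drop_id filter_append length_append le_add1)
  ultimately show ?thesis by simp
qed

lemma filter_take_less': "p < length w \<Longrightarrow> \<not> w ! p \<Longrightarrow> length (filter Not (take p w)) < length (filter Not w)"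
proof -
  assume p: "p < length w" "\<not> w ! p"
  have "take (Suc p) w = take p w @ [w ! p]" using p by (simp add: take_Suc_conv_app_nth)
  then have "length (filter Not (take (Suc p) w)) = Suc (length (filter Not (take p w)))" using p by simp
  moreover have "length (filter Not (take (Suc p) w)) \<le> length (filter Not w)"
    by (metis append_take_drop_id filter_append length_append le_add1)
  ultimately show ?thesis by simp
qed

lemma mrg_nth: "p < length w \<Longrightarrow> length (filter Not w) = length u \<Longrightarrow> length (filter id w) = length v \<Longrightarrow>
  mrg u v w ! p = (if w ! p then v ! length (filter id (take p w)) else u ! length (filter Not (take p w)))"
proof (induction w arbitrary: u v p)
  case Nil then show ?case by simp
next
  case (Cons x w)
  show ?case
  proof (cases x)
    case True
    then obtain y v' where v: "v = y # v'" using Cons.prems by (cases v) auto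
    show ?thesis
    proof (cases p)
      case 0 then show ?thesis using True v by simp
    next
      case (Suc p')
      then show ?thesis using True v Cons.prems Cons.IH[of p' u v'] by (simp add: id_def)
    qed
  next
    case False
    then obtain y u' where u: "u = y # u'" using Cons.prems by (cases u) auto
    show ?thesis
    proof (cases p)
      case 0 then show ?thesis using False u by simp
    next
      case (Suc p')
      then show ?thesis using False u Cons.prems Cons.IH[of p' u' v] by (simp add: id_def)
    qed
  qed
qed

lemma len_filter_upt: "length (filter P [a..<b]) = card {y. a \<le> y \<and> y < b \<and> P y}"
proof -
  have "length (filter P [a..<b]) = card (set (filter P [a..<b]))" by (rule distinct_card[symmetric]) simp
  also have "set (filter P [a..<b]) = {y. a \<le> y \<and> y < b \<and> P y}" by auto
  finally show ?thesis .
qed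


definition wA :: "nat \<Rightarrow> nat set \<Rightarrow> bool list" where
  "wA N A = map (\<lambda>x. x \<in> A) [1..<Suc N]"

lemma wA_len[simp]: "length (wA N A) = N" by (simp add: wA_def)

lemma wA_nth: "p < N \<Longrightarrow> wA N A ! p = (Suc p \<in> A)" by (simp add: wA_def del: upt_Suc)

lemma wA_take_id: "A \<subseteq> nset N \<Longrightarrow> p \<le> N \<Longrightarrow> length (filter id (take p (wA N A))) = rk A (Suc p)"
proof -
  assume A: "A \<subseteq> nset N" and p: "p \<le> N"
  have "take p (wA N A) = map (\<lambda>x. x \<in> A) [1..<Suc p]" using p by (simp add: wA_def take_map del: upt_Suc)
  then have "length (filter id (take p (wA N A))) = length (filter (\<lambda>x. x \<in> A) [1..<Suc p])"
    by (simp add: comp_def del: upt_Suc)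
  also have "\<dots> = card {y. 1 \<le> y \<and> y < Suc p \<and> y \<in> A}" by (rule len_filter_upt)
  also have "{y. 1 \<le> y \<and> y < Suc p \<and> y \<in> A} = {y \<in> A. y < Suc p}" using A by (auto simp: nset_def)
  finally show ?thesis by (simp add: rk_def id_def)
qed

lemma wA_take_not: "A \<subseteq> nset N \<Longrightarrow> p \<le> N \<Longrightarrow> length (filter Not (take p (wA N A))) = rk (nset N - A) (Suc p)"
proof -
  assume A: "A \<subseteq> nset N" and p: "p \<le> N"
  have "take p (wA N A) = map (\<lambda>x. x \<in> A) [1..<Suc p]" using p by (simp add: wA_def take_map del: upt_Suc)
  then have "length (filter Not (take p (wA N A))) = length (filter (\<lambda>x. x \<notin> A) [1..<Suc p])"
    by (simp add: o_def del: upt_Suc)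
  also have "\<dots> = card {y. 1 \<le> y \<and> y < Suc p \<and> y \<notin> A}" by (rule len_filter_upt)
  also have "{y. 1 \<le> y \<and> y < Suc p \<and> y \<notin> A} = {y \<in> nset N - A. y < Suc p}" using A p by (auto simp: nset_def)
  finally show ?thesis by (simp add: rk_def)
qed

lemma wA_card_id: "A \<subseteq> nset N \<Longrightarrow> length (filter id (wA N A)) = card A"
  using wA_take_id[of A N N] by (simp add: rk_def nset_def) (metis (no_types, lifting) Collect_cong Collect_mem_eq le_imp_less_Suc atLeastAtMost_iff subset_iff)

lemma wA_card_not: "A \<subseteq> nset N \<Longrightarrow> length (filter Not (wA N A)) = card (nset N - A)"
proof -
  assume A: "A \<subseteq> nset N"
  have "length (filter Not (wA N A)) = rk (nset N - A) (Suc N)" using wA_take_not[OF A, of N] by simp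
  also have "\<dots> = card (nset N - A)" unfolding rk_def by (rule arg_cong[where f = card]) (auto simp: nset_def)
  finally show ?thesis .
qed

lemma wA_nxt: "p < N \<Longrightarrow> nxt (drop (Suc p) (wA N A)) = (if Suc p < N then Some (Suc (Suc p) \<in> A) else None)"
  by (auto simp: wA_def nxt_def drop_map upt_conv_Cons simp del: upt_Suc)

lemma mrg_S:
  assumes A: "A \<subseteq> nset (m + n)" and cA: "card A = n"
    and I: "I \<subseteq> nset (m - 1)" and J: "J \<subseteq> nset (n - 1)" and p: "p < m + n"
  shows "mrg (map (\<lambda>i. i \<notin> I) [1..<Suc m]) (map (\<lambda>j. j \<notin> J) [1..<Suc n]) (wA (m + n) A) ! p
         = (Suc p \<notin> shuf_set m n A I J)"
proof -
  let ?N = "m + n" and ?w = "wA (m + n) A" and ?Ac = "nset (m + n) - A"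
  have fA: "finite A" and fAc: "finite ?Ac" using A by (auto simp: nset_def finite_subset)
  have cAc: "card ?Ac = m" using A cA by (simp add: card_Diff_subset nset_def finite_subset)
  have l1: "length (filter Not ?w) = length (map (\<lambda>i. i \<notin> I) [1..<Suc m])"
    using wA_card_not[OF A] cAc by simp
  have l2: "length (filter id ?w) = length (map (\<lambda>j. j \<notin> J) [1..<Suc n])"
    using wA_card_id[OF A] cA by simp
  have pN: "p < length ?w" using p by simp
  have xN: "Suc p \<in> nset ?N" using p by (simp add: nset_def)
  note mn = mrg_nth[OF pN l1 l2]
  show ?thesis
  proof (cases "Suc p \<in> A")
    case True
    have r: "length (filter id (take p ?w)) = rk A (Suc p)" using wA_take_id[OF A] p by simp
    have rl: "rk A (Suc p) < n" using rk_less[OF fA True] cA by simp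
    have "mrg (map (\<lambda>i. i \<notin> I) [1..<Suc m]) (map (\<lambda>j. j \<notin> J) [1..<Suc n]) ?w ! p
        = (Suc (rk A (Suc p)) \<notin> J)"
      using mn True r rl wA_nth[OF p] by (simp del: upt_Suc)
    then show ?thesis using shuf_char[OF A cA I J, of "Suc p"] True xN by simp
  next
    case False
    have xAc: "Suc p \<in> ?Ac" using False xN by simp
    have r: "length (filter Not (take p ?w)) = rk ?Ac (Suc p)" using wA_take_not[OF A] p by simp
    have rl: "rk ?Ac (Suc p) < m" using rk_less[OF fAc xAc] cAc by simp
    have "mrg (map (\<lambda>i. i \<notin> I) [1..<Suc m]) (map (\<lambda>j. j \<notin> J) [1..<Suc n]) ?w ! p
        = (Suc (rk ?Ac (Suc p)) \<notin> I)"
      using mn False r rl wA_nth[OF p] by (simp del: upt_Suc)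
    then show ?thesis using shuf_char[OF A cA I J, of "Suc p"] False xN by simp
  qed
qed

lemma ball_nset: "(\<forall>x\<in>nset N. P x) \<longleftrightarrow> (\<forall>p<N. P (Suc p))"
proof
  assume "\<forall>x\<in>nset N. P x" then show "\<forall>p<N. P (Suc p)" by (auto simp: nset_def)
next
  assume H: "\<forall>p<N. P (Suc p)"
  show "\<forall>x\<in>nset N. P x"
  proof
    fix x assume "x \<in> nset N"
    then have "x = Suc (x - 1)" "x - 1 < N" by (auto simp: nset_def)
    then show "P x" using H by metis
  qed
qed

lemma core:
  assumes A: "A \<subseteq> nset (m + n)" and cA: "card A = n"
    and I: "I \<subseteq> nset (m - 1)" and J: "J \<subseteq> nset (n - 1)" and K: "K \<subseteq> nset (m + n - 1)"
  shows "ok (map (\<lambda>i. i \<notin> I) [1..<Suc m]) (map (\<lambda>j. j \<notin> J) [1..<Suc n])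
            (map (\<lambda>x. x \<notin> K) [1..<Suc (m + n)]) (wA (m + n) A)
    \<longleftrightarrow> (shuf_set m n A I J \<inter> cset (m + n) A = {} \<and>
         shuf_set m n A I J \<subseteq> K \<and> K \<subseteq> shuf_set m n A I J \<union> cset (m + n) A \<and>
         K \<inter> c2 (m + n) A = {})"
proof -
  let ?N = "m + n" and ?w = "wA (m + n) A" and ?Ac = "nset (m + n) - A"
  let ?S = "shuf_set m n A I J"
  let ?U = "map (\<lambda>i. i \<notin> I) [1..<Suc m]" and ?V = "map (\<lambda>j. j \<notin> J) [1..<Suc n]"
  let ?T = "map (\<lambda>x. x \<notin> K) [1..<Suc (m + n)]"
  have cAc: "card ?Ac = m" using A cA by (simp add: card_Diff_subset nset_def finite_subset)
  have l1: "length (filter Not ?w) = length ?U" using wA_card_not[OF A] cAc by simp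
  have l2: "length (filter id ?w) = length ?V" using wA_card_id[OF A] cA by simp
  have "ok ?U ?V ?T ?w \<longleftrightarrow> (\<forall>p < ?N. loc (?w ! p) (nxt (drop (Suc p) ?w)) (mrg ?U ?V ?w ! p) (?T ! p))"
    unfolding ok_char using l1 l2 by simp
  also have "\<dots> \<longleftrightarrow> (\<forall>p < ?N. loc (Suc p \<in> A) (if Suc p < ?N then Some (Suc (Suc p) \<in> A) else None)
                       (Suc p \<notin> ?S) (Suc p \<notin> K))"
  proof -
    have "\<And>p. p < ?N \<Longrightarrow> ?T ! p = (Suc p \<notin> K)" by (simp del: upt_Suc)
    then show ?thesis using wA_nth wA_nxt mrg_S[OF A cA I J] by simp
  qed
  also have "\<dots> \<longleftrightarrow> (\<forall>x\<in>nset ?N. (x \<in> ?S \<longrightarrow> x \<notin> c1 ?N A \<and> x \<notin> c2 ?N A) \<and> (x \<in> ?S \<longrightarrow> x \<in> K) \<and>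
        (x \<in> K \<longrightarrow> x \<in> ?S \<or> x \<in> c1 ?N A \<or> x \<in> c2 ?N A) \<and> (x \<in> K \<longrightarrow> x \<notin> c2 ?N A))"
    unfolding ball_nset
  proof (intro all_cong1 imp_cong refl)
    fix p assume p: "p < ?N"
    have m1: "Suc p \<in> c1 ?N A \<longleftrightarrow> Suc p \<in> A \<and> Suc (Suc p) \<notin> A \<and> Suc p < ?N"
      using p by (auto simp: c1_char)
    have m2: "Suc p \<in> c2 ?N A \<longleftrightarrow> Suc p \<notin> A \<and> Suc (Suc p) \<in> A \<and> Suc p < ?N"
      using p by (auto simp: c2_char[OF A])
    show "loc (Suc p \<in> A) (if Suc p < ?N then Some (Suc (Suc p) \<in> A) else None) (Suc p \<notin> ?S) (Suc p \<notin> K)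
      \<longleftrightarrow> (Suc p \<in> ?S \<longrightarrow> Suc p \<notin> c1 ?N A \<and> Suc p \<notin> c2 ?N A) \<and> (Suc p \<in> ?S \<longrightarrow> Suc p \<in> K) \<and>
        (Suc p \<in> K \<longrightarrow> Suc p \<in> ?S \<or> Suc p \<in> c1 ?N A \<or> Suc p \<in> c2 ?N A) \<and> (Suc p \<in> K \<longrightarrow> Suc p \<notin> c2 ?N A)"
      unfolding m1 m2 loc_def by auto
  qed
  also have "\<dots> \<longleftrightarrow> (?S \<inter> cset ?N A = {} \<and> ?S \<subseteq> K \<and> K \<subseteq> ?S \<union> cset ?N A \<and> K \<inter> c2 ?N A = {})"
  proof -
    have Ss: "?S \<subseteq> nset ?N" using shuf_char[OF A cA I J] by blast
    have "nset (?N - 1) \<subseteq> nset ?N" by (auto simp: nset_def)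
    then have Ks: "K \<subseteq> nset ?N" using K by blast
    show ?thesis unfolding cset_def using Ss Ks by blast
  qed
  finally show ?thesis .
qed

lemma wA_inj: "A \<subseteq> nset N \<Longrightarrow> B \<subseteq> nset N \<Longrightarrow> wA N A = wA N B \<Longrightarrow> A = B"
proof -
  assume A: "A \<subseteq> nset N" and B: "B \<subseteq> nset N" and e: "wA N A = wA N B"
  have "x \<in> A \<longleftrightarrow> x \<in> B" if x: "x \<in> nset N" for x
  proof -
    have "x = Suc (x - 1)" "x - 1 < N" using x by (auto simp: nset_def)
    then show ?thesis using e wA_nth[of "x - 1" N A] wA_nth[of "x - 1" N B] by metis
  qed
  then show "A = B" using A B by blast
qed

lemma main_c:
  assumes I: "I \<subseteq> nset (m - 1)" and J: "J \<subseteq> nset (n - 1)" and K: "K \<subseteq> nset (m + n - 1)"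
  shows "card (OS (comp m (nset (m - 1) - I)) (comp n (nset (n - 1) - J)) (comp (m + n) (nset (m + n - 1) - K)))
    = card {A. A \<subseteq> nset (m + n) \<and> card A = n \<and>
                    shuf_set m n A I J \<inter> cset (m + n) A = {} \<and>
                    shuf_set m n A I J \<subseteq> K \<and> K \<subseteq> shuf_set m n A I J \<union> cset (m + n) A \<and>
                    K \<inter> c2 (m + n) A = {}}"
    (is "card (OS ?a ?b ?c) = card ?C")
proof -
  let ?U = "map (\<lambda>i. i \<notin> I) [1..<Suc m]" and ?V = "map (\<lambda>j. j \<notin> J) [1..<Suc n]"
  let ?T = "map (\<lambda>x. x \<notin> K) [1..<Suc (m + n)]"
  let ?N = "m + n"
  note fa = enc_flags[OF I] and fb = enc_flags[OF J] and fc = enc_flags[OF K]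
  have "card (OS ?a ?b ?c) = card (W ?a ?b ?c)" using fa fb fc by (intro OS_W) auto
  also have "W ?a ?b ?c = {w. ok ?U ?V ?T w}" unfolding W_def using fa fb fc by simp
  also have "{w. ok ?U ?V ?T w} = wA ?N ` ?C"
  proof
    show "wA ?N ` ?C \<subseteq> {w. ok ?U ?V ?T w}"
    proof
      fix w assume "w \<in> wA ?N ` ?C"
      then obtain A where A: "A \<in> ?C" "w = wA ?N A" by blast
      then show "w \<in> {w. ok ?U ?V ?T w}" using core[OF _ _ I J K, of A] by auto
    qed
  next
    show "{w. ok ?U ?V ?T w} \<subseteq> wA ?N ` ?C"
    proof
      fix w assume "w \<in> {w. ok ?U ?V ?T w}"
      then have ok: "ok ?U ?V ?T w" by simp
      have lw: "length w = ?N" using ok_length[OF ok] by (simp del: upt_Suc)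
      define A where "A = {x \<in> nset ?N. w ! (x - 1)}"
      have As: "A \<subseteq> nset ?N" unfolding A_def by blast
      have wA: "wA ?N A = w"
      proof (rule nth_equalityI)
        show "length (wA ?N A) = length w" using lw by simp
        fix p assume "p < length (wA ?N A)"
        then have p: "p < ?N" by simp
        then show "wA ?N A ! p = w ! p" using wA_nth[OF p] by (simp add: A_def nset_def)
      qed
      have cA: "card A = n" using wA_card_id[OF As] ok[unfolded ok_char] wA by (simp del: upt_Suc)
      have "A \<in> ?C" using core[OF As cA I J K] ok wA As cA by simp
      then show "w \<in> wA ?N ` ?C" using wA by blast
    qed
  qed
  also have "card (wA ?N ` ?C) = card ?C"
  proof (rule card_image, rule inj_onI)
    fix A B assume "A \<in> ?C" "B \<in> ?C" "wA ?N A = wA ?N B"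
    then show "A = B" using wA_inj[of A ?N B] by blast
  qed
  finally show ?thesis .
qed

lemma card_shuf:
  assumes A: "A \<subseteq> nset (m + n)" and cA: "card A = n"
    and I: "I \<subseteq> nset (m - 1)" and J: "J \<subseteq> nset (n - 1)"
  shows "card (shuf_set m n A I J) = card I + card J"
proof -
  let ?Ac = "nset (m + n) - A"
  let ?La = "sorted_list_of_set ?Ac" and ?Lb = "sorted_list_of_set A"
  have fA: "finite A" and fAc: "finite ?Ac" using A by (auto simp: nset_def finite_subset)
  have cAc: "card ?Ac = m" using A cA by (simp add: card_Diff_subset nset_def finite_subset)
  have fI: "finite I" and fJ: "finite J" using I J by (auto simp: nset_def finite_subset)
  have iI: "\<And>i. i \<in> I \<Longrightarrow> 1 \<le> i \<and> i - 1 < m"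
  proof -
    fix i assume "i \<in> I" then have "i \<in> nset (m - 1)" using I by blast
    then show "1 \<le> i \<and> i - 1 < m" by (auto simp: nset_def)
  qed
  have jJ: "\<And>j. j \<in> J \<Longrightarrow> 1 \<le> j \<and> j - 1 < n"
  proof -
    fix j assume "j \<in> J" then have "j \<in> nset (n - 1)" using J by blast
    then show "1 \<le> j \<and> j - 1 < n" by (auto simp: nset_def)
  qed
  have inj1: "inj_on (\<lambda>i. ?La ! (i - 1)) I"
  proof (rule inj_onI)
    fix i i' assume h: "i \<in> I" "i' \<in> I" "?La ! (i - 1) = ?La ! (i' - 1)"
    have "distinct ?La" by simp
    moreover have "i - 1 < length ?La" "i' - 1 < length ?La" using iI h cAc by auto
    ultimately have "i - 1 = i' - 1" using h(3) nth_eq_iff_index_eq by blast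
    then show "i = i'" using iI h by (metis Suc_pred' less_le_trans zero_less_one)
  qed
  have inj2: "inj_on (\<lambda>j. ?Lb ! (j - 1)) J"
  proof (rule inj_onI)
    fix i i' assume h: "i \<in> J" "i' \<in> J" "?Lb ! (i - 1) = ?Lb ! (i' - 1)"
    have "distinct ?Lb" by simp
    moreover have "i - 1 < length ?Lb" "i' - 1 < length ?Lb" using jJ h cA by auto
    ultimately have "i - 1 = i' - 1" using h(3) nth_eq_iff_index_eq by blast
    then show "i = i'" using jJ h by (metis Suc_pred' less_le_trans zero_less_one)
  qed
  have s1: "(\<lambda>i. ?La ! (i - 1)) ` I \<subseteq> ?Ac" using r1[OF fAc] iI cAc by auto
  have s2: "(\<lambda>j. ?Lb ! (j - 1)) ` J \<subseteq> A" using r1[OF fA] jJ cA by auto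
  have d: "(\<lambda>i. ?La ! (i - 1)) ` I \<inter> (\<lambda>j. ?Lb ! (j - 1)) ` J = {}" using s1 s2 by blast
  have "card (shuf_set m n A I J) = card ((\<lambda>i. ?La ! (i - 1)) ` I) + card ((\<lambda>j. ?Lb ! (j - 1)) ` J)"
    unfolding shuf_set_def using d fI fJ by (simp add: card_Un_disjoint)
  then show ?thesis using card_image[OF inj1] card_image[OF inj2] by simp
qed

lemma b_equiv:
  assumes fK: "finite K" and d: "S \<inter> (c1' \<union> c2') = {}" and sK: "S \<subseteq> K" and Ks: "K \<subseteq> S \<union> (c1' \<union> c2')"
    and c12: "c1' \<inter> c2' = {}" and fS: "finite S"
  shows "card (K - c2') = card S \<longleftrightarrow> K \<inter> c1' = {}"
proof -
  have e: "K - c2' = S \<union> (K \<inter> c1')" using d sK Ks c12 by blast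
  have "card (K - c2') = card S + card (K \<inter> c1')"
    unfolding e using d fK fS by (subst card_Un_disjoint) auto
  then show ?thesis using fK by simp
qed

lemma shuf_swap: "A \<subseteq> nset (m + n) \<Longrightarrow> shuf_set n m (nset (m + n) - A) J I = shuf_set m n A I J"
proof -
  assume A: "A \<subseteq> nset (m + n)"
  have e: "nset (m + n) - (nset (m + n) - A) = A" using A by blast
  have nm: "nset (n + m) = nset (m + n)" by (simp add: add.commute)
  show ?thesis unfolding shuf_set_def nm e by (rule Un_commute)
qed

lemma c1_compl: "c1 N (nset N - A) = c2 N A" by (simp add: c1_def c2_def)

lemma c2_compl: "A \<subseteq> nset N \<Longrightarrow> c2 N (nset N - A) = c1 N A"
proof -
  assume A: "A \<subseteq> nset N"
  have e: "nset N - (nset N - A) = A" using A by blast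
  show ?thesis unfolding c2_def c1_def e ..
qed

lemma cset_compl: "A \<subseteq> nset N \<Longrightarrow> cset N (nset N - A) = cset N A"
  unfolding cset_def using c1_compl c2_compl by blast

lemma c12_disj: "A \<subseteq> nset N \<Longrightarrow> c1 N A \<inter> c2 N A = {}"
  by (auto simp: c1_char c2_char)

lemma OS_card_swap: "card (OS \<alpha> \<beta> \<gamma>) = card (OS \<beta> \<alpha> \<gamma>)"
proof -
  have "OS \<beta> \<alpha> \<gamma> = prod.swap ` OS \<alpha> \<beta> \<gamma>"
  proof
    show "OS \<beta> \<alpha> \<gamma> \<subseteq> prod.swap ` OS \<alpha> \<beta> \<gamma>"
    proof
      fix p assume p: "p \<in> OS \<beta> \<alpha> \<gamma>"
      obtain f g where fg: "p = (f, g)" by (cases p)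
      then have "(g, f) \<in> OS \<alpha> \<beta> \<gamma>" using p OS_swap by blast
      then show "p \<in> prod.swap ` OS \<alpha> \<beta> \<gamma>" using fg by force
    qed
  next
    show "prod.swap ` OS \<alpha> \<beta> \<gamma> \<subseteq> OS \<beta> \<alpha> \<gamma>" using OS_swap by auto
  qed
  moreover have "inj_on prod.swap (OS \<alpha> \<beta> \<gamma>)" by (rule inj_on_subset[OF _ subset_UNIV]) simp
  ultimately show ?thesis by (simp add: card_image)
qed

lemma main_b:
  assumes I: "I \<subseteq> nset (m - 1)" and J: "J \<subseteq> nset (n - 1)" and K: "K \<subseteq> nset (m + n - 1)"
  shows "card {A. A \<subseteq> nset (m + n) \<and> card A = n \<and>
                    shuf_set m n A I J \<inter> cset (m + n) A = {} \<and>
                    shuf_set m n A I J \<subseteq> K \<and> K \<subseteq> shuf_set m n A I J \<union> cset (m + n) A \<and>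
                    card (K - c2 (m + n) A) = card I + card J}
       = card {A. A \<subseteq> nset (n + m) \<and> card A = m \<and>
                    shuf_set n m A J I \<inter> cset (n + m) A = {} \<and>
                    shuf_set n m A J I \<subseteq> K \<and> K \<subseteq> shuf_set n m A J I \<union> cset (n + m) A \<and>
                    K \<inter> c2 (n + m) A = {}}"
    (is "card ?B = card ?C")
proof -
  let ?N = "m + n"
  have nm: "n + m = m + n" by simp
  have fK: "finite K" using K by (auto simp: nset_def finite_subset)
  have key: "A \<in> ?B \<longleftrightarrow> nset ?N - A \<in> ?C" if A: "A \<subseteq> nset ?N" for A
  proof -
    let ?A' = "nset ?N - A"
    have fA: "finite A" using A by (auto simp: nset_def finite_subset)
    have cA': "card ?A' = ?N - card A" using A by (simp add: card_Diff_subset nset_def finite_subset)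
    have cAle: "card A \<le> ?N" using A card_mono[of "nset ?N" A] by (simp add: nset_def)
    have cc: "card A = n \<longleftrightarrow> card ?A' = m" using cA' cAle by auto
    show ?thesis
    proof (cases "card A = n")
      case False
      then have n1: "A \<notin> ?B" and n2: "nset ?N - A \<notin> ?C" using cc by simp_all
      from n1 n2 show ?thesis by blast
    next
      case True
      let ?S = "shuf_set m n A I J"
      have sw: "shuf_set n m ?A' J I = ?S" by (rule shuf_swap[OF A])
      have cs: "cset ?N ?A' = cset ?N A" by (rule cset_compl[OF A])
      have c2c: "c2 ?N ?A' = c1 ?N A" by (rule c2_compl[OF A])
      have fS: "finite ?S"
      proof -
        have "?S \<subseteq> nset ?N" using shuf_char[OF A True I J] by blast
        then show ?thesis by (auto simp: nset_def finite_subset)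
      qed
      have cS: "card ?S = card I + card J" by (rule card_shuf[OF A True I J])
      have beq: "card (K - c2 ?N A) = card I + card J \<longleftrightarrow> K \<inter> c1 ?N A = {}"
        if h: "?S \<inter> cset ?N A = {}" "?S \<subseteq> K" "K \<subseteq> ?S \<union> cset ?N A"
      proof -
        have h1: "?S \<inter> (c1 ?N A \<union> c2 ?N A) = {}" using h(1) unfolding cset_def .
        have h3: "K \<subseteq> ?S \<union> (c1 ?N A \<union> c2 ?N A)" using h(3) unfolding cset_def .
        show ?thesis using b_equiv[OF fK h1 h(2) h3 c12_disj[OF A] fS] cS by simp
      qed
      have eC: "?A' \<in> ?C \<longleftrightarrow> (?S \<inter> cset ?N A = {} \<and> ?S \<subseteq> K \<and> K \<subseteq> ?S \<union> cset ?N A \<and> K \<inter> c1 ?N A = {})"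
        using cc True unfolding nm mem_Collect_eq sw cs c2c by simp
      have eB: "A \<in> ?B \<longleftrightarrow> (?S \<inter> cset ?N A = {} \<and> ?S \<subseteq> K \<and> K \<subseteq> ?S \<union> cset ?N A \<and> card (K - c2 ?N A) = card I + card J)"
        using A True unfolding mem_Collect_eq by simp
      show ?thesis unfolding eC eB using beq by blast
    qed
  qed
  have img: "?C = (\<lambda>A. nset ?N - A) ` ?B"
  proof
    show "?C \<subseteq> (\<lambda>A. nset ?N - A) ` ?B"
    proof
      fix A' assume A': "A' \<in> ?C"
      then have "A' \<subseteq> nset (n + m)" by blast
      then have As: "A' \<subseteq> nset ?N" by (simp only: nm)
      have e: "nset ?N - (nset ?N - A') = A'" using As by blast
      have k: "nset ?N - A' \<in> ?B \<longleftrightarrow> A' \<in> ?C" using key[OF Diff_subset[of "nset ?N" A']] unfolding e .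
      have "nset ?N - A' \<in> ?B" using k A' by (rule iffD2)
      moreover have "A' = nset ?N - (nset ?N - A')" using e by (rule sym)
      ultimately show "A' \<in> (\<lambda>A. nset ?N - A) ` ?B" by (rule rev_image_eqI)
    qed
  next
    show "(\<lambda>A. nset ?N - A) ` ?B \<subseteq> ?C"
    proof
      fix x assume "x \<in> (\<lambda>A. nset ?N - A) ` ?B"
      then obtain A where A: "A \<in> ?B" and x: "x = nset ?N - A" by blast
      from A have As: "A \<subseteq> nset ?N" by blast
      show "x \<in> ?C" unfolding x using key[OF As] A by (rule iffD1)
    qed
  qed
  have inj: "inj_on (\<lambda>A. nset ?N - A) ?B"
  proof (rule inj_onI)
    fix A B assume "A \<in> ?B" "B \<in> ?B" "nset ?N - A = nset ?N - B"
    then show "A = B" by blast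
  qed
  show ?thesis unfolding img using card_image[OF inj] by simp
qed

theorem corollary4p14:
  fixes m n :: nat and I J K :: "nat set"
  assumes "I \<subseteq> nset (m - 1)" and "J \<subseteq> nset (n - 1)" and "K \<subseteq> nset (m + n - 1)"
  shows "card (overlapping_shuffles (comp m (nset (m - 1) - I)) (comp n (nset (n - 1) - J))
                 (comp (m + n) (nset (m + n - 1) - K)))
         = card {A. A \<subseteq> nset (m + n) \<and> card A = n \<and>
                    shuf_set m n A I J \<inter> cset (m + n) A = {} \<and>
                    shuf_set m n A I J \<subseteq> K \<and> K \<subseteq> shuf_set m n A I J \<union> cset (m + n) A \<and>
                    card (K - c2 (m + n) A) = card I + card J}
       \<and> card {A. A \<subseteq> nset (m + n) \<and> card A = n \<and>
                    shuf_set m n A I J \<inter> cset (m + n) A = {} \<and>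
                    shuf_set m n A I J \<subseteq> K \<and> K \<subseteq> shuf_set m n A I J \<union> cset (m + n) A \<and>
                    card (K - c2 (m + n) A) = card I + card J}
         = card {A. A \<subseteq> nset (m + n) \<and> card A = n \<and>
                    shuf_set m n A I J \<inter> cset (m + n) A = {} \<and>
                    shuf_set m n A I J \<subseteq> K \<and> K \<subseteq> shuf_set m n A I J \<union> cset (m + n) A \<and>
                    K \<inter> c2 (m + n) A = {}}"
proof -
  note I = assms(1) and J = assms(2) and K = assms(3)
  have nm: "n + m = m + n" by simp
  have K': "K \<subseteq> nset (n + m - 1)" using K by (simp add: add.commute)
  have ac: "card (OS (comp m (nset (m - 1) - I)) (comp n (nset (n - 1) - J)) (comp (m + n) (nset (m + n - 1) - K)))
    = card {A. A \<subseteq> nset (m + n) \<and> card A = n \<and>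
                    shuf_set m n A I J \<inter> cset (m + n) A = {} \<and>
                    shuf_set m n A I J \<subseteq> K \<and> K \<subseteq> shuf_set m n A I J \<union> cset (m + n) A \<and>
                    K \<inter> c2 (m + n) A = {}}"
    by (rule main_c[OF I J K])
  have ac': "card (OS (comp n (nset (n - 1) - J)) (comp m (nset (m - 1) - I)) (comp (n + m) (nset (n + m - 1) - K)))
    = card {A. A \<subseteq> nset (n + m) \<and> card A = m \<and>
                    shuf_set n m A J I \<inter> cset (n + m) A = {} \<and>
                    shuf_set n m A J I \<subseteq> K \<and> K \<subseteq> shuf_set n m A J I \<union> cset (n + m) A \<and>
                    K \<inter> c2 (n + m) A = {}}"
    by (rule main_c[OF J I K'])
  have sw: "card (OS (comp m (nset (m - 1) - I)) (comp n (nset (n - 1) - J)) (comp (m + n) (nset (m + n - 1) - K)))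
    = card (OS (comp n (nset (n - 1) - J)) (comp m (nset (m - 1) - I)) (comp (n + m) (nset (n + m - 1) - K)))"
    unfolding nm by (rule OS_card_swap)
  have ab: "card (OS (comp m (nset (m - 1) - I)) (comp n (nset (n - 1) - J)) (comp (m + n) (nset (m + n - 1) - K)))
    = card {A. A \<subseteq> nset (m + n) \<and> card A = n \<and>
                    shuf_set m n A I J \<inter> cset (m + n) A = {} \<and>
                    shuf_set m n A I J \<subseteq> K \<and> K \<subseteq> shuf_set m n A I J \<union> cset (m + n) A \<and>
                    card (K - c2 (m + n) A) = card I + card J}"
    using sw ac' main_b[OF I J K] by simp
  show ?thesis using ab ac by simp
qed

end
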